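(* Assume (B1)–(B4) and consider the NL-IAPIAL method described in the context. Let $\bar d:=\mathrm{dist}(\bar z,\partial\mathcal H)$ (where $\partial\mathcal H$ is the boundary of $\mathcal H$ and $\bar z,\tau$ are from (B4)) and $$\kappa_0:=2\big[K_h+B_f^{(1)}\big]D_h+\Big[\frac{\sigma^2}{2(1-\sigma)^2}+2\Big(\frac{1+\sigma}{1-\sigma}\Big)\Big]\frac{D_h^2}{\lambda}.$$ Then: (a) for every $k\ge1$ at which $p_k$ is computed, $$\min\{1,\bar d\}\tau\|p_k\|+\frac{\|p_k\|^2}{c_k}\le\kappa_0+\frac1{c_k}\langle p_k,p_{k-1}\rangle;$$ (b) for every $k\ge0$ at which $p_k$ is defined, $$\|p_k\|\le C_0:=\frac{\max\{\|p_0\|,\kappa_0\}}{\min\{1,\bar d\}\tau}.$$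
   Context: $\mathcal K\subseteq\mathbb{R}^\ell$ is a nonempty closed convex cone, $\mathcal K^*=\{y:\langle y,x\rangle\ge0\ \forall x\in\mathcal K\}$ its dual cone, $u\preceq_{\mathcal K}v$ means $v-u\in\mathcal K$, $\Pi_S$ is the Euclidean projection onto a closed convex set $S$, $\mathrm{dist}(y,S)$ the Euclidean distance. $\partial_\varepsilon\varphi(z):=\{u:\varphi(z')\ge\varphi(z)+\langle u,z'-z\rangle-\varepsilon\ \forall z'\}$, $\partial=\partial_0$. For differentiable $g:\mathbb{R}^n\to\mathbb{R}^\ell$, $\nabla g(z)\in\mathbb{R}^{n\times\ell}$ is the transpose of the Jacobian. $g$ is $\mathcal K$-convex if $g(tz'+(1-t)z)-tg(z')-(1-t)g(z)\preceq_{\mathcal K}0$ for all $z,z'$, $t\in[0,1]$. (B1) $h:\mathbb{R}^n\to(-\infty,\infty]$ proper lsc convex, $K_h$-Lipschitz on its domain; $\mathcal H:=\mathrm{dom}\,h$ compact with diameter $D_h$. (B2) $f$ differentiable on an open set containing $\mathcal H$; $m_f,L_f>0$ with $f(z')-f(z)-\langle\nabla f(z),z'-z\rangle\ge-\frac{m_f}{2}\|z'-z\|^2$ and $\|\nabla f(z')-\nabla f(z)\|\le L_f\|z'-z\|$ on $\mathcal H$. (B3) $g$ is $\mathcal K$-convex, differentiable, $\nabla g$ is $L_g$-Lipschitz on $\mathbb{R}^n$. (B4) there exist $\bar z\in\mathrm{int}\,\mathcal H$, $\tau\in(0,1]$ with $g(\bar z)\preceq_{\mathcal K}0$ and $\max\{\|\nabla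 g(z)p\|,|\langle p,g(\bar z)\rangle|\}\ge\tau\|p\|$ for all $z\in\mathcal H$, $p\in\mathcal K^*$. Constants: $B_f^{(1)}:=\sup_{\mathcal H}\|\nabla f\|$, $B_g^{(0)}:=\sup_{\mathcal H}\|g\|$, $B_g^{(1)}:=\sup_{\mathcal H}\|\nabla g\|$. Functions: $\phi=f+h$; $\mathcal L_c(z;p):=f(z)+h(z)+\frac1{2c}[\mathrm{dist}^2(p+cg(z),-\mathcal K)-\|p\|^2]$; $\widetilde{\mathcal L}_c(z;p):=\mathcal L_c(z;p)-h(z)$, with $\nabla_z\widetilde{\mathcal L}_c(z;p)=\nabla f(z)+\nabla g(z)\Pi_{\mathcal K^*}(p+cg(z))$; $\Lambda(c,p):=L_f+L_g\|p\|+c(B_g^{(0)}L_g+[B_g^{(1)}]^2)$. NL-IAPIAL method. Inputs: $\lambda\in(0,1/(2m_f)]$, $\sigma\in(0,1/\sqrt2]$, $c_1>0$, $(z_0,p_0)\in\mathcal H\times\mathbb{R}^\ell$, $(\hat\rho,\hat\eta)\in\mathbb{R}^2_{++}$. Set $\hat k=0$, $k=1$. Iteration $k$: (1) set $L^\psi_{k-1}:=\lambda\Lambda(c_k,p_{k-1})+1$, $\sigma_{k-1}:=\sigma/\sqrt{L^\psi_{k-1}}$, and obtain (by any procedure) $(z_k,v_k,\varepsilon_k)\in\mathbb{R}^n\times\mathbb{R}^n\times\mathbb{R}_+$ with $v_k\in\partial_{\varepsilon_k}(\lambda\mathcal L_{c_k}(\cdot;p_{k-1})+\frac12\|\cdot-z_{k-1}\|^2)(z_k)$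 and $\|v_k\|^2+2\varepsilon_k\le\sigma_{k-1}^2\|v_k+z_{k-1}-z_k\|^2$. (2) Set $r_k:=v_k+z_{k-1}-z_k$, $\delta_k:=\varepsilon_k/\lambda$, $\hat z_k:=\mathrm{argmin}_u\{\lambda[\langle\nabla_z\widetilde{\mathcal L}_{c_k}(z_k;p_{k-1}),u-z_k\rangle+h(u)]-\langle r_k,u-z_k\rangle+\frac{L^\psi_{k-1}}2\|u-z_k\|^2\}$, $w_k:=\frac1\lambda[r_k+L^\psi_{k-1}(z_k-\hat z_k)]$, $\hat p_k:=\Pi_{\mathcal K^*}(p_{k-1}+c_kg(\hat z_k))$, $\hat q_k:=(p_{k-1}-\hat p_k)/c_k$, $\hat w_k:=w_k+\nabla_z\widetilde{\mathcal L}_{c_k}(\hat z_k;p_{k-1})-\nabla_z\widetilde{\mathcal L}_{c_k}(z_k;p_{k-1})$; if $\|\hat w_k\|\le\hat\rho$ and $\|\hat q_k\|\le\hat\eta$, stop. (3) $p_k:=\Pi_{\mathcal K^*}(p_{k-1}+c_kg(z_k))$. (4) If $k>\hat k+1$ and $\Delta_k:=\frac{1}{k-\hat k-1}[\mathcal L_{c_k}(z_{\hat k+1};p_{\hat k+1})-\mathcal L_{c_k}(z_k;p_k)]\le\frac{\lambda(1-\sigma^2)\hat\rho^2}{4(1+2\sigma)^2}$, set $c_{k+1}=2c_k$ and $\hat k=k$; otherwise $c_{k+1}=c_k$. (5) $k\leftarrow k+1$. *)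

theory Defs
  imports "HOL-Analysis.Analysis"
begin

definition dual_cone :: "'a::real_inner set \<Rightarrow> 'a set" where
  "dual_cone K = {y. \<forall>x\<in>K. 0 \<le> inner y x}"

definition K_convex :: "'b::real_vector set \<Rightarrow> ('a::real_vector \<Rightarrow> 'b) \<Rightarrow> bool" where
  "K_convex K g \<longleftrightarrow> (\<forall>z z' t. 0 \<le> t \<and> t \<le> 1 \<longrightarrow>
      t *\<^sub>R g z' + (1 - t) *\<^sub>R g z - g (t *\<^sub>R z' + (1 - t) *\<^sub>R z) \<in> K)"

definition aug_lag ::
  "('n::euclidean_space \<Rightarrow> real) \<Rightarrow> ('n \<Rightarrow> real) \<Rightarrow> ('n \<Rightarrow> 'l::euclidean_space) \<Rightarrow> 'l set
    \<Rightarrow> real \<Rightarrow> 'n \<Rightarrow> 'l \<Rightarrow> real" where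
  "aug_lag f h g K c z p =
     f z + h z + ((infdist (p + c *\<^sub>R g z) (uminus ` K))\<^sup>2 - (norm p)\<^sup>2) / (2 * c)"

text \<open>Gradient of the smooth part: grad f z + grad g z * Proj_{K*}(p + c g z).
  Here Dg z :: real^'l^'n is the n x l matrix grad g(z) (transpose of the Jacobian).\<close>
definition grad_Ltilde ::
  "(real^'n \<Rightarrow> real^'n) \<Rightarrow> (real^'n \<Rightarrow> real^'l^'n) \<Rightarrow> (real^'n \<Rightarrow> real^'l) \<Rightarrow> (real^'l) set
    \<Rightarrow> real \<Rightarrow> real^'n \<Rightarrow> real^'l \<Rightarrow> real^'n" where
  "grad_Ltilde gf Dg g K c z p = gf z + Dg z *v closest_point (dual_cone K) (p + c *\<^sub>R g z)"

definition Lambda_const :: "real \<Rightarrow> real \<Rightarrow> real \<Rightarrow> real \<Rightarrow> real \<Rightarrow> 'l::real_normed_vector \<Rightarrow> real" where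
  "Lambda_const Lf Lg Bg0 Bg1 c p = Lf + Lg * norm p + c * (Bg0 * Lg + Bg1\<^sup>2)"

end

theory Submission
  imports Defs
begin



lemma inner_transpose_mv:
  fixes A :: "real^'m^'n"
  shows "inner (A *v q) d = inner q (transpose A *v d)"
  by (metis dot_lmul_matrix inner_commute transpose_matrix_vector)

lemma onorm_transpose_le:
  fixes A :: "real^'m^'n"
  shows "onorm (\<lambda>d. transpose A *v d) \<le> onorm (\<lambda>q. A *v q)"
proof (rule onorm_le)
  fix x :: "real^'n"
  let ?y = "transpose A *v x"
  have "(norm ?y)^2 = inner ?y ?y" by (simp add: power2_norm_eq_inner)
  also have "\<dots> = inner (A *v ?y) x" by (metis inner_transpose_mv inner_commute)
  also have "\<dots> \<le> norm (A *v ?y) * norm x" by (rule norm_cauchy_schwarz)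
  also have "\<dots> \<le> onorm (\<lambda>q. A *v q) * norm ?y * norm x"
    using onorm[OF matrix_vector_mul_bounded_linear, of A ?y]
    by (simp add: mult_right_mono)
  finally have "(norm ?y)^2 \<le> onorm (\<lambda>q. A *v q) * norm x * norm ?y" by (simp add: algebra_simps)
  then show "norm ?y \<le> onorm (\<lambda>q. A *v q) * norm x"
    using onorm_pos_le[OF matrix_vector_mul_bounded_linear, of A]
    by (cases "norm ?y = 0") (auto simp: power2_eq_square)
qed




lemma dual_cone_props:
  fixes K :: "(real^'l) set"
  shows "closed (dual_cone K)" "convex (dual_cone K)" "0 \<in> dual_cone K"
    "y \<in> dual_cone K \<Longrightarrow> 0 \<le> a \<Longrightarrow> a *\<^sub>R y \<in> dual_cone K"
    "y \<in> dual_cone K \<Longrightarrow> y' \<in> dual_cone K \<Longrightarrow> y + y' \<in> dual_cone K"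
proof -
  have eq: "dual_cone K = (\<Inter>x\<in>K. {y. inner x y \<ge> 0})"
    by (auto simp: dual_cone_def inner_commute)
  show "closed (dual_cone K)" unfolding eq by (rule closed_INT) (auto intro: closed_halfspace_ge)
  show "convex (dual_cone K)" unfolding eq by (rule convex_INT) (auto intro: convex_halfspace_ge)
  show "0 \<in> dual_cone K" by (simp add: dual_cone_def)
  show "y \<in> dual_cone K \<Longrightarrow> 0 \<le> a \<Longrightarrow> a *\<^sub>R y \<in> dual_cone K"
    by (simp add: dual_cone_def)
  show "y \<in> dual_cone K \<Longrightarrow> y' \<in> dual_cone K \<Longrightarrow> y + y' \<in> dual_cone K"
    by (simp add: dual_cone_def inner_add_left add_nonneg_nonneg)
qed

lemma sq_add: "(norm (a + b))^2 = (norm a)^2 + 2 * inner a b + (norm b)^2"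
  for a b :: "'a::real_inner"
  by (simp add: power2_norm_eq_inner inner_add_left inner_add_right inner_commute)

lemma moreau:
  fixes K :: "(real^'l) set"
  assumes K: "convex_cone K" "closed K"
  defines "P \<equiv> closest_point (dual_cone K)"
  shows "P s \<in> dual_cone K" "inner (P s) (s - P s) = 0" "- (s - P s) \<in> K"
    "infdist s (uminus ` K) = norm (P s)" "norm (P s) \<le> norm s"
proof -
  note D = dual_cone_props[where K=K]
  show P: "P s \<in> dual_cone K" unfolding P_def
    by (rule closest_point_in_set) (use D in auto)
  have dot: "inner (s - P s) (x - P s) \<le> 0" if "x \<in> dual_cone K" for x
    unfolding P_def by (rule closest_point_dot) (use D that in auto)
  have a: "inner (s - P s) (0 - P s) \<le> 0" by (rule dot) (use D in auto)
  have b: "inner (s - P s) (2 *\<^sub>R P s - P s) \<le> 0" by (rule dot) (use D P in auto)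
  from a b show orth: "inner (P s) (s - P s) = 0"
    by (auto simp: inner_diff_right inner_commute algebra_simps)
  have neg: "inner (s - P s) y \<le> 0" if "y \<in> dual_cone K" for y
    using dot[of "y + P s"] D(5)[OF that P] by simp
  show mem: "- (s - P s) \<in> K"
  proof (rule ccontr)
    assume nm: "- (s - P s) \<notin> K"
    have cK: "convex K" using K(1) by (simp add: convex_cone_def)
    obtain a b where ab: "inner a (- (s - P s)) < b" "\<forall>x\<in>K. inner a x > b"
      using separating_hyperplane_closed_point[OF cK K(2) nm] by blast
    have K0: "0 \<in> K" using K(1) by (simp add: convex_cone_iff)
    have Kc: "\<forall>x\<in>K. \<forall>c\<ge>0. c *\<^sub>R x \<in> K" using K(1) by (simp add: convex_cone_iff)
    have b0: "b < 0" using ab(2) K0 by auto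
    have "a \<in> dual_cone K"
      unfolding dual_cone_def
    proof (clarify, rule ccontr)
      fix x assume x: "x \<in> K" and nn: "\<not> 0 \<le> inner a x"
      define c where "c = b / inner a x"
      have c0: "c \<ge> 0" using b0 nn by (simp add: c_def divide_nonpos_neg)
      have "inner a (c *\<^sub>R x) = b" using nn by (simp add: c_def)
      moreover have "c *\<^sub>R x \<in> K" using Kc x c0 by blast
      then have "inner a (c *\<^sub>R x) > b" using ab(2) by blast
      ultimately show False by simp
    qed
    then have "inner (s - P s) a \<le> 0" by (rule neg)
    then show False using ab(1) b0 by (simp add: inner_commute inner_diff_right)
  qed
  have sP: "s - P s \<in> uminus ` K" using mem by (metis image_eqI minus_minus)
  have pyth: "(norm s)^2 = (norm (P s))^2 + (norm (s - P s))^2"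
  proof -
    define w where "w = s - P s"
    have o: "inner (P s) w = 0" using orth by (simp add: w_def)
    have "s = P s + w" by (simp add: w_def)
    then have "(norm s)^2 = (norm (P s + w))^2" by simp
    also have "\<dots> = (norm (P s))^2 + (norm w)^2"
      using o by (simp add: power2_norm_eq_inner inner_add_left inner_add_right inner_commute)
    finally show ?thesis by (simp add: w_def)
  qed
  then have "(norm (P s))^2 \<le> (norm s)^2" by simp
  then show "norm (P s) \<le> norm s"
    by (rule power2_le_imp_le) simp
  show "infdist s (uminus ` K) = norm (P s)"
  proof (rule antisym)
    show "infdist s (uminus ` K) \<le> norm (P s)"
      using infdist_le[OF sP, of s] by (simp add: dist_norm)
    have ne: "uminus ` K \<noteq> {}" using sP by auto
    show "norm (P s) \<le> infdist s (uminus ` K)"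
      unfolding infdist_notempty[OF ne]
    proof (rule cINF_greatest[OF ne])
      fix y assume "y \<in> uminus ` K"
      then obtain x where x: "x \<in> K" "y = - x" by auto
      have ge: "inner (P s) x \<ge> 0" using P x(1) by (simp add: dual_cone_def)
      have "s - y = P s + ((s - P s) + x)" using x by simp
      then have "(norm (s - y))^2 = (norm (P s))^2 + 2 * inner (P s) ((s - P s) + x) + (norm ((s - P s) + x))^2"
        by (simp only: sq_add)
      also have "\<dots> \<ge> (norm (P s))^2" using orth ge by (simp add: inner_add_right)
      finally have "(norm (P s))^2 \<le> (norm (s - y))^2" .
      then show "norm (P s) \<le> dist s y" unfolding dist_norm by (rule power2_le_imp_le) simp_all
    qed
  qed
qed




lemma small_pos:
  fixes Y C :: real
  assumes "\<And>t. 0 < t \<Longrightarrow> t \<le> 1 \<Longrightarrow> Y \<le> C * t"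
  shows "Y \<le> 0"
proof (rule ccontr)
  assume Y: "\<not> Y \<le> 0"
  show False
  proof (cases "C \<le> 0")
    case True then show False using assms[of 1] Y by simp
  next
    case False
    define t where "t = min 1 (Y / (2 * C))"
    have t: "0 < t" "t \<le> 1" using Y False by (auto simp: t_def)
    have "C * t \<le> C * (Y / (2 * C))" using False by (intro mult_left_mono) (auto simp: t_def)
    also have "\<dots> = Y / 2" using False by simp
    finally show False using assms[OF t] Y by simp
  qed
qed

lemma quad:
  fixes X L s e a :: real
  assumes L: "L > 0" and s: "s \<ge> 0" and e: "e \<ge> 0" and a: "a \<ge> 0" and ea: "e \<le> a^2 / (2 * L)"
    and H: "\<And>t. 0 < t \<Longrightarrow> t \<le> 1 \<Longrightarrow> t * X \<le> L * t^2 * s^2 + e"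
  shows "X \<le> 2 * a * s + e"
proof (cases "a = 0")
  case True
  then have e0: "e = 0" using ea e by simp
  have "X \<le> 0"
  proof (rule small_pos[where C = "L * s^2"])
    fix t :: real assume t: "0 < t" "t \<le> 1"
    have "t * X \<le> t * (L * s^2 * t)" using H[OF t] e0 by (simp add: power2_eq_square algebra_simps)
    then show "X \<le> L * s^2 * t" using t by simp
  qed
  then show ?thesis using True e0 by simp
next
  case False
  then have a0: "a > 0" using a by simp
  show ?thesis
  proof (cases "2 * L * s \<le> a")
    case True
    have X1: "X \<le> L * s^2 + e" using H[of 1] by simp
    have "L * s^2 = (L * s) * s" by (simp add: power2_eq_square)
    also have "\<dots> \<le> (a / 2) * s" using True s by (intro mult_right_mono) auto
    finally have "L * s^2 \<le> (a / 2) * s" .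
    moreover have "(a / 2) * s \<le> 2 * a * s" using a0 s by (simp add: mult_right_mono)
    ultimately show ?thesis using X1 by linarith
  next
    case False
    then have s0: "s > 0" using a0 s by (cases "s = 0") auto
    define t where "t = a / (2 * L * s)"
    have t: "0 < t" "t \<le> 1" using False a0 L s0 by (auto simp: t_def)
    have "t * X \<le> L * t^2 * s^2 + e" by (rule H[OF t])
    then have X1: "X \<le> L * t * s^2 + e / t" using t
      by (simp add: field_simps power2_eq_square)
    have e1: "L * t * s^2 = a * s / 2" using L s0 by (simp add: t_def power2_eq_square field_simps)
    have "e / t = e * (2 * L * s) / a" using a0 L s0 by (simp add: t_def field_simps)
    also have "\<dots> \<le> (a^2 / (2 * L)) * (2 * L * s) / a"
      using ea L s0 a0 by (intro divide_right_mono mult_right_mono) auto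
    also have "\<dots> = a * s" using L a0 by (simp add: power2_eq_square field_simps)
    finally have e2: "e / t \<le> a * s" .
    show ?thesis using X1 e1 e2 mult_pos_pos[OF a0 s0] e by linarith
  qed
qed




lemma rem_gen:
  fixes f :: "'a::real_normed_vector \<Rightarrow> 'b::real_normed_vector"
  assumes S: "convex S" "x \<in> S" "y \<in> S"
    and der: "\<And>z. z \<in> S \<Longrightarrow> (f has_derivative f' z) (at z within S)"
    and B: "\<And>z. z \<in> S \<Longrightarrow> onorm (\<lambda>d. f' z d - f' x d) \<le> M * norm (z - x)"
    and M: "M \<ge> 0"
  shows "norm (f y - f x - f' x (y - x)) \<le> M * (norm (y - x))^2"
proof -
  let ?T = "closed_segment x y"
  have sub: "?T \<subseteq> S" using S by (simp add: closed_segment_subset)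
  have "norm (f y - f x - f' x (y - x)) \<le> norm (y - x) * (M * norm (y - x))"
  proof (rule differentiable_bound_linearization[where S = ?T and ?x0.0 = x])
    fix t :: real assume "t \<in> {0..1}"
    then show "x + t *\<^sub>R (y - x) \<in> ?T"
    proof -
      have "x + t *\<^sub>R (y - x) = (1 - t) *\<^sub>R x + t *\<^sub>R y" by (simp add: algebra_simps)
      then show ?thesis using \<open>t \<in> {0..1}\<close> unfolding closed_segment_def by auto
    qed
  next
    fix z assume z: "z \<in> ?T"
    show "(f has_derivative f' z) (at z within ?T)"
      using der[of z] z sub by (auto intro: has_derivative_subset)
  next
    fix z assume z: "z \<in> ?T"
    have "onorm (f' z - f' x) = onorm (\<lambda>d. f' z d - f' x d)" by (simp add: fun_diff_def)
    also have "\<dots> \<le> M * norm (z - x)" using B[of z] z sub by auto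
    also have "\<dots> \<le> M * norm (y - x)" using segment_bound1[OF z] M by (simp add: mult_left_mono)
    finally show "onorm (f' z - f' x) \<le> M * norm (y - x)" .
  next
    show "x \<in> ?T" by simp
  qed
  then show ?thesis by (simp add: power2_eq_square algebra_simps)
qed

lemma transpose_diff': "transpose (A - B) = transpose A - (transpose B :: 'a::ring_1^'m^'n)"
  by (simp add: transpose_def vec_eq_iff)

lemma g_rem:
  fixes g :: "real^'n \<Rightarrow> real^'l" and Dg :: "real^'n \<Rightarrow> real^'l^'n"
  assumes diff: "\<forall>z. (g has_derivative (\<lambda>d. transpose (Dg z) *v d)) (at z)"
    and lip: "\<forall>z z'. onorm (\<lambda>q. (Dg z' - Dg z) *v q) \<le> Lg * norm (z' - z)"
    and Lg: "Lg \<ge> 0"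
  shows "norm (g y - g x - transpose (Dg x) *v (y - x)) \<le> Lg * (norm (y - x))^2"
proof (rule rem_gen[where S=UNIV and f' = "\<lambda>z d. transpose (Dg z) *v d"])
  fix z
  show "(g has_derivative (\<lambda>d. transpose (Dg z) *v d)) (at z within UNIV)" using diff by simp
  have "onorm (\<lambda>d. transpose (Dg z) *v d - transpose (Dg x) *v d)
      = onorm (\<lambda>d. transpose (Dg z - Dg x) *v d)"
    by (simp add: transpose_diff' matrix_vector_mult_diff_rdistrib)
  also have "\<dots> \<le> onorm (\<lambda>q. (Dg z - Dg x) *v q)" by (rule onorm_transpose_le)
  also have "\<dots> \<le> Lg * norm (z - x)" using lip by blast
  finally show "onorm (\<lambda>d. transpose (Dg z) *v d - transpose (Dg x) *v d) \<le> Lg * norm (z - x)" .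
qed (use Lg in auto)




lemma div_ge1: fixes a L :: real assumes "a \<ge> 0" "L \<ge> 1" shows "a / L \<le> a"
proof -
  have "a * 1 \<le> a * L" using assms by (intro mult_left_mono) auto
  then show ?thesis using assms by (simp add: divide_le_eq)
qed

lemma half_le: "2 * e \<le> Q \<Longrightarrow> e \<le> Q / (2::real)" by simp

lemma upper_step:
  fixes K :: "(real^'l) set" and H :: "(real^'n) set" and h f :: "real^'n \<Rightarrow> real"
    and gf :: "real^'n \<Rightarrow> real^'n" and g :: "real^'n \<Rightarrow> real^'l" and Dg :: "real^'n \<Rightarrow> real^'l^'n"
  assumes Kc: "convex_cone K" "closed K"
  and Hc: "convex H"
  and hconv: "convex_on H h"
  and hlip: "\<forall>z\<in>H. \<forall>z'\<in>H. \<bar>h z' - h z\<bar> \<le> Kh * norm (z' - z)"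
  and frem: "\<forall>x\<in>H. \<forall>y\<in>H. f y - f x - inner (gf x) (y - x) \<le> Lf * (norm (y - x))^2"
  and gfB: "\<forall>x\<in>H. norm (gf x) \<le> Bf"
  and grem: "\<forall>x y. norm (g y - g x - transpose (Dg x) *v (y - x)) \<le> Lg * (norm (y - x))^2"
  and glip: "\<forall>x\<in>H. \<forall>y\<in>H. norm (g y - g x) \<le> Bg1 * norm (y - x)"
  and gB: "\<forall>x\<in>H. norm (g x) \<le> Bg0"
  and Lg0: "Lg \<ge> 0" and Kh0: "Kh \<ge> 0" and Bf0: "Bf \<ge> 0"
  and diam: "\<forall>x\<in>H. \<forall>y\<in>H. norm (x - y) \<le> D"
  and lam: "lam > 0" and sg: "0 < sgm" "sgm < 1"
  and c: "c > 0" and L: "L \<ge> lam * (Lf + Lg * (norm p + c * Bg0) + c * Bg1^2 / 2) + 1/2" "L \<ge> 1"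
  and zk: "zk \<in> H" "zo \<in> H" "0 \<le> e"
  and prox: "\<forall>u\<in>H. lam * aug_lag f h g K c u p + (1/2) * (norm (u - zo))^2
       \<ge> lam * aug_lag f h g K c zk p + (1/2) * (norm (zk - zo))^2 + inner v (u - zk) - e"
  and vb: "(norm v)^2 + 2 * e \<le> (sgm / sqrt L)^2 * (norm (v + zo - zk))^2"
  and pk: "pk = closest_point (dual_cone K) (p + c *\<^sub>R g zk)"
  and u: "u \<in> H"
  shows "inner (Dg zk *v pk) (zk - u)
     \<le> (Kh + Bf) * D + ((1 + 2 * sgm) / (1 - sgm) + sgm^2 / (2 * (1 - sgm)^2)) * D^2 / lam"
proof -
  define s0 where "s0 = p + c *\<^sub>R g zk"
  note M = moreau[OF Kc, of s0]
  have pk': "closest_point (dual_cone K) s0 = pk" using pk s0_def by simp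
  note M = M[unfolded pk']
  define I where "I y = infdist (p + c *\<^sub>R g y) (uminus ` K)" for y
  have Izk: "I zk = norm pk" using M(4) by (simp add: I_def s0_def)
  have Ib: "(I y)^2 \<le> (norm pk)^2 + 2 * c * inner pk (g y - g zk) + c^2 * (norm (g y - g zk))^2" for y
  proof -
    have mem: "s0 - pk \<in> uminus ` K" using M(3) by (metis image_eqI minus_minus)
    have "I y \<le> dist (p + c *\<^sub>R g y) (s0 - pk)" unfolding I_def by (rule infdist_le[OF mem])
    also have "\<dots> = norm (pk + c *\<^sub>R (g y - g zk))"
      by (simp add: dist_norm s0_def algebra_simps)
    finally have "(I y)^2 \<le> (norm (pk + c *\<^sub>R (g y - g zk)))^2"
      by (rule power_mono) (simp add: I_def infdist_nonneg)
    also have "\<dots> = (norm pk)^2 + 2 * inner pk (c *\<^sub>R (g y - g zk)) + (norm (c *\<^sub>R (g y - g zk)))^2"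
      by (rule sq_add)
    also have "\<dots> = (norm pk)^2 + 2 * c * inner pk (g y - g zk) + c^2 * (norm (g y - g zk))^2"
      using c by (simp add: power_mult_distrib)
    finally show ?thesis .
  qed
  have pkb: "norm pk \<le> norm p + c * Bg0"
  proof -
    have "norm pk \<le> norm s0" by (rule M(5))
    also have "\<dots> \<le> norm p + c * norm (g zk)" unfolding s0_def using c
      by (metis abs_of_pos norm_scaleR norm_triangle_ineq)
    also have "\<dots> \<le> norm p + c * Bg0" using gB zk c by (simp add: mult_left_mono)
    finally show ?thesis .
  qed
  define s where "s = norm (u - zk)"
  define R where "R = norm (v + zo - zk)"
  define q where "q = Dg zk *v pk"
  define X where "X = lam * (h zk - h u) + inner (lam *\<^sub>R gf zk + lam *\<^sub>R q + (zk - zo) - v) (zk - u)"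
  have step: "t * X \<le> L * t^2 * s^2 + e" if t: "0 < t" "t \<le> 1" for t
  proof -
    define y where "y = zk + t *\<^sub>R (u - zk)"
    define dd where "dd = y - zk"
    have dd: "dd = t *\<^sub>R (u - zk)" by (simp add: dd_def y_def)
    have ndd: "norm dd = t * s" using t by (simp add: dd s_def)
    have yH: "y \<in> H"
    proof -
      have "y = (1 - t) *\<^sub>R zk + t *\<^sub>R u" by (simp add: y_def algebra_simps)
      then show ?thesis using Hc zk u t by (simp add: convex_def)
    qed
    have P: "lam * aug_lag f h g K c y p + (1/2) * (norm (y - zo))^2
       \<ge> lam * aug_lag f h g K c zk p + (1/2) * (norm (zk - zo))^2 + inner v (y - zk) - e"
      using prox yH by blast
    have AL: "aug_lag f h g K c y p - aug_lag f h g K c zk p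
        = (f y - f zk) + (h y - h zk) + ((I y)^2 - (I zk)^2) / (2 * c)"
      unfolding aug_lag_def I_def using c by (simp add: field_simps)
    have fb: "f y - f zk \<le> inner (gf zk) dd + Lf * (t * s)^2"
    proof -
      have "f y - f zk - inner (gf zk) (y - zk) \<le> Lf * (norm (y - zk))^2" using frem zk(1) yH by blast
      then show ?thesis unfolding dd_def[symmetric] ndd by simp
    qed
    have hb: "h y - h zk \<le> t * (h u - h zk)"
    proof -
      have "y = (1 - t) *\<^sub>R zk + t *\<^sub>R u" by (simp add: y_def algebra_simps)
      then have "h y \<le> (1 - t) * h zk + t * h u"
        using convex_onD[OF hconv, of t zk u] t zk u by simp
      then show ?thesis by (simp add: algebra_simps)
    qed
    have gr: "norm (g y - g zk - transpose (Dg zk) *v dd) \<le> Lg * (t * s)^2"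
    proof -
      have "norm (g y - g zk - transpose (Dg zk) *v (y - zk)) \<le> Lg * (norm (y - zk))^2" using grem by blast
      then show ?thesis unfolding dd_def[symmetric] ndd .
    qed
    have ginner: "inner pk (g y - g zk) \<le> inner q dd + norm pk * (Lg * (t * s)^2)"
    proof -
      have "inner pk (g y - g zk) = inner pk (transpose (Dg zk) *v dd) + inner pk (g y - g zk - transpose (Dg zk) *v dd)"
        by (simp add: inner_diff_right)
      also have "inner pk (transpose (Dg zk) *v dd) = inner q dd"
        by (simp add: q_def inner_transpose_mv)
      also have "inner pk (g y - g zk - transpose (Dg zk) *v dd) \<le> norm pk * (Lg * (t * s)^2)"
        using gr norm_cauchy_schwarz[of pk "g y - g zk - transpose (Dg zk) *v dd"]
        by (meson mult_left_mono norm_ge_zero order_trans)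
      finally show ?thesis by simp
    qed
    have gl: "(norm (g y - g zk))^2 \<le> Bg1^2 * (t * s)^2"
    proof -
      have "norm (g y - g zk) \<le> Bg1 * norm (y - zk)" using glip yH zk(1) by blast
      then have "norm (g y - g zk) \<le> Bg1 * (t * s)" unfolding dd_def[symmetric] ndd .
      then have "(norm (g y - g zk))^2 \<le> (Bg1 * (t * s))^2"
        by (rule power_mono) simp
      then show ?thesis by (simp add: power_mult_distrib)
    qed
    have Ipart: "((I y)^2 - (I zk)^2) / (2 * c)
        \<le> inner q dd + norm pk * Lg * (t * s)^2 + c * Bg1^2 / 2 * (t * s)^2"
    proof -
      have "(I y)^2 - (I zk)^2 \<le> 2 * c * inner pk (g y - g zk) + c^2 * (norm (g y - g zk))^2"
        using Ib[of y] Izk by simp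
      also have "\<dots> \<le> 2 * c * (inner q dd + norm pk * (Lg * (t * s)^2)) + c^2 * (Bg1^2 * (t * s)^2)"
        using ginner gl c by (intro add_mono mult_left_mono) auto
      finally have "(I y)^2 - (I zk)^2 \<le> 2 * c * (inner q dd + norm pk * (Lg * (t * s)^2)) + c^2 * (Bg1^2 * (t * s)^2)" .
      then show ?thesis using c by (simp add: field_simps power2_eq_square)
    qed
    have quadp: "(1/2) * (norm (y - zo))^2 - (1/2) * (norm (zk - zo))^2 = inner (zk - zo) dd + (1/2) * (t * s)^2"
    proof -
      have "y - zo = (zk - zo) + dd" by (simp add: dd_def)
      then have "(norm (y - zo))^2 = (norm (zk - zo))^2 + 2 * inner (zk - zo) dd + (norm dd)^2"
        by (simp only: sq_add)
      then show ?thesis using ndd by (simp add: field_simps)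
    qed
    have coef: "lam * (Lf + norm pk * Lg + c * Bg1^2 / 2) + 1/2 \<le> L"
    proof -
      have "norm pk * Lg \<le> (norm p + c * Bg0) * Lg" using pkb Lg0 by (rule mult_right_mono)
      then have "lam * (Lf + norm pk * Lg + c * Bg1^2 / 2) \<le> lam * (Lf + Lg * (norm p + c * Bg0) + c * Bg1^2 / 2)"
        using lam by (intro mult_left_mono) (auto simp: mult.commute)
      then show ?thesis using L(1) by linarith
    qed
    have sum: "lam * (aug_lag f h g K c y p - aug_lag f h g K c zk p) + ((1/2) * (norm (y - zo))^2 - (1/2) * (norm (zk - zo))^2)
       \<le> lam * t * (h u - h zk) + inner (lam *\<^sub>R gf zk + lam *\<^sub>R q + (zk - zo)) dd
         + (lam * (Lf + norm pk * Lg + c * Bg1^2 / 2) + 1/2) * (t * s)^2"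
    proof -
      have "lam * (aug_lag f h g K c y p - aug_lag f h g K c zk p)
         \<le> lam * (inner (gf zk) dd + Lf * (t * s)^2 + t * (h u - h zk)
              + (inner q dd + norm pk * Lg * (t * s)^2 + c * Bg1^2 / 2 * (t * s)^2))"
        unfolding AL using fb hb Ipart lam by (intro mult_left_mono) auto
      then show ?thesis unfolding quadp
        by (simp add: inner_add_left algebra_simps)
    qed
    have "(lam * (Lf + norm pk * Lg + c * Bg1^2 / 2) + 1/2) * (t * s)^2 \<le> L * (t * s)^2"
      using coef by (rule mult_right_mono) simp
    with sum P have "inner v dd - e \<le> lam * t * (h u - h zk) + inner (lam *\<^sub>R gf zk + lam *\<^sub>R q + (zk - zo)) dd + L * (t * s)^2"
      unfolding dd_def by (simp add: algebra_simps)
    then have "t * X \<le> L * (t * s)^2 + e"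
      unfolding X_def dd by (simp add: algebra_simps inner_diff_right inner_diff_left)
    then show ?thesis by (simp add: power_mult_distrib)
  qed
  have L0: "L > 0" using L(2) by simp
  have vR: "(norm v)^2 + 2 * e \<le> sgm^2 * R^2 / L"
    using vb L0 by (simp add: R_def power_divide)
  have e2L: "2 * e \<le> sgm^2 * R^2 / L" using vR by (smt (verit) zero_le_power2)
  have eq2: "(sgm * R)^2 / (2 * L) = (sgm^2 * R^2 / L) / 2" by (simp add: power_mult_distrib)
  have ea: "e \<le> (sgm * R)^2 / (2 * L)" unfolding eq2 by (rule half_le[OF e2L])
  have Xb: "X \<le> 2 * (sgm * R) * s + e"
    by (rule quad[OF L0 _ zk(3) _ ea step]) (use sg in \<open>auto simp: s_def R_def\<close>)
  have D0: "D \<ge> 0" using diam zk by (metis norm_ge_zero order_trans)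
  have sD: "s \<le> D" using diam u zk by (simp add: s_def)
  have vsR: "norm v \<le> sgm * R"
  proof -
    have "(norm v)^2 \<le> sgm^2 * R^2 / L" using vR zk(3) by simp
    also have "\<dots> \<le> sgm^2 * R^2" using L(2) by (intro div_ge1) auto
    finally have "(norm v)^2 \<le> (sgm * R)^2" by (simp add: power_mult_distrib)
    then show ?thesis by (rule power2_le_imp_le) (use sg in \<open>simp add: R_def\<close>)
  qed
  have RD: "R * (1 - sgm) \<le> D"
  proof -
    have "R \<le> norm v + norm (zo - zk)" unfolding R_def
      by (metis add_diff_eq norm_triangle_ineq)
    moreover have "norm (zo - zk) \<le> D" using diam zk by blast
    ultimately have "R \<le> sgm * R + D" using vsR by linarith
    then show ?thesis by (simp add: algebra_simps)
  qed
  have e2: "e \<le> sgm^2 * R^2 / 2"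
  proof -
    have "e \<le> sgm^2 * R^2 / (2 * L)" using ea by (simp add: power_mult_distrib)
    also have "\<dots> \<le> sgm^2 * R^2 / 2" using L(2) by (intro divide_left_mono) auto
    finally show ?thesis .
  qed
  have key: "lam * inner q (zk - u) = X - lam * (h zk - h u) - lam * inner (gf zk) (zk - u) + inner (v + zo - zk) (zk - u)"
    unfolding X_def by (simp add: inner_add_left inner_diff_left algebra_simps)
  have b1: "- lam * (h zk - h u) \<le> lam * Kh * s"
  proof -
    have "\<bar>h zk - h u\<bar> \<le> Kh * norm (zk - u)" using hlip u zk(1) by blast
    then have "h u - h zk \<le> Kh * s" by (simp add: s_def norm_minus_commute)
    then have "lam * (h u - h zk) \<le> lam * (Kh * s)" using lam by (intro mult_left_mono) auto
    then show ?thesis by (simp add: algebra_simps)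
  qed
  have b2: "- lam * inner (gf zk) (zk - u) \<le> lam * Bf * s"
  proof -
    have "- inner (gf zk) (zk - u) \<le> norm (gf zk) * s"
      using norm_cauchy_schwarz[of "gf zk" "u - zk"] by (simp add: s_def inner_diff_right)
    also have "\<dots> \<le> Bf * s" using gfB zk by (simp add: s_def mult_right_mono)
    finally have "lam * (- inner (gf zk) (zk - u)) \<le> lam * (Bf * s)" using lam by (intro mult_left_mono) auto
    then show ?thesis by (simp add: algebra_simps)
  qed
  have b3: "inner (v + zo - zk) (zk - u) \<le> R * s"
    using norm_cauchy_schwarz[of "v + zo - zk" "zk - u"] by (simp add: R_def s_def norm_minus_commute)
  have R0: "R \<ge> 0" by (simp add: R_def)
  have s0': "s \<ge> 0" by (simp add: s_def)
  have tot: "lam * inner q (zk - u) \<le> (1 + 2 * sgm) * R * s + sgm^2 * R^2 / 2 + lam * (Kh + Bf) * s"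
    using key Xb b1 b2 b3 e2 by (simp add: algebra_simps)
  also have "\<dots> \<le> (1 + 2 * sgm) * (D / (1 - sgm)) * D + sgm^2 * (D / (1 - sgm))^2 / 2 + lam * (Kh + Bf) * D"
  proof -
    have R1: "R \<le> D / (1 - sgm)" using RD sg by (simp add: le_divide_eq)
    show ?thesis
      using R1 sD R0 s0' sg lam Kh0 Bf0 D0
      by (intro add_mono mult_mono divide_right_mono power_mono mult_left_mono) auto
  qed
  finally have fin: "lam * inner q (zk - u) \<le> (1 + 2 * sgm) * (D / (1 - sgm)) * D + sgm^2 * (D / (1 - sgm))^2 / 2 + lam * (Kh + Bf) * D" .
  have sg1: "1 - sgm \<noteq> 0" using sg by simp
  have eqA: "(1 + 2 * sgm) * (D / (1 - sgm)) * D + sgm^2 * (D / (1 - sgm))^2 / 2 + lam * (Kh + Bf) * D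
     = lam * ((Kh + Bf) * D + ((1 + 2 * sgm) / (1 - sgm) + sgm^2 / (2 * (1 - sgm)^2)) * D^2 / lam)"
    using lam sg1 by (simp add: field_simps power2_eq_square)
  have "lam * inner q (zk - u) \<le> lam * ((Kh + Bf) * D + ((1 + 2 * sgm) / (1 - sgm) + sgm^2 / (2 * (1 - sgm)^2)) * D^2 / lam)"
    using fin eqA by simp
  then show ?thesis using lam unfolding q_def by simp
qed




lemma lower_step:
  fixes K :: "(real^'l) set" and H :: "(real^'n) set"
    and g :: "real^'n \<Rightarrow> real^'l" and Dg :: "real^'n \<Rightarrow> real^'l^'n"
  assumes Kc: "convex_cone K" "closed K"
  and Kconv: "K_convex K g"
  and grem: "\<forall>x y. norm (g y - g x - transpose (Dg x) *v (y - x)) \<le> Lg * (norm (y - x))^2"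
  and zbar: "- g zbar \<in> K"
  and reg: "\<forall>z\<in>H. \<forall>q\<in>dual_cone K. max (norm (Dg z *v q)) \<bar>inner q (g zbar)\<bar> \<ge> tau * norm q"
  and ball: "cball zbar d \<subseteq> H" "0 \<le> d" "d \<le> 1"
  and c: "c > 0" and zk: "zk \<in> H"
  and pk: "pk = closest_point (dual_cone K) (p + c *\<^sub>R g zk)"
  shows "\<exists>u\<in>H. inner (Dg zk *v pk) (zk - u) \<ge> d * tau * norm pk + ((norm pk)^2 - inner pk p) / c"
proof -
  define s0 where "s0 = p + c *\<^sub>R g zk"
  note M = moreau[OF Kc, of s0]
  have pk': "closest_point (dual_cone K) s0 = pk" using pk s0_def by simp
  note M = M[unfolded pk']
  define q where "q = Dg zk *v pk"
  define u where "u = (if q = 0 then zbar else zbar - (d / norm q) *\<^sub>R q)"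
  have uH: "u \<in> H"
  proof -
    have "dist zbar u \<le> d" using ball(2) by (auto simp: u_def dist_norm)
    then show ?thesis using ball(1) by auto
  qed
  have iu: "inner q (zk - u) = inner q (zk - zbar) + d * norm q"
  proof (cases "q = 0")
    case True then show ?thesis by (simp add: u_def)
  next
    case False
    have "inner q (zk - u) = inner q (zk - zbar) + (d / norm q) * inner q q"
      using False by (simp add: u_def inner_diff_right inner_add_right algebra_simps)
    also have "inner q q = (norm q)^2" by (simp add: power2_norm_eq_inner)
    also have "(d / norm q) * (norm q)^2 = d * norm q" using False by (simp add: power2_eq_square)
    finally show ?thesis .
  qed
  define w where "w = zbar - zk"
  define Jw where "Jw = transpose (Dg zk) *v w"
  have qw: "inner q (zk - zbar) = - inner pk Jw"
  proof -
    have "inner q (zk - zbar) = - inner q w" by (simp add: w_def inner_diff_right)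
    also have "inner q w = inner pk Jw" by (simp add: q_def Jw_def inner_transpose_mv)
    finally show ?thesis .
  qed
  have pkK: "pk \<in> dual_cone K" using M(1) .
  have conv: "inner pk Jw - (inner pk (g zbar) - inner pk (g zk)) \<le> 0"
  proof (rule small_pos[where C = "norm pk * Lg * (norm w)^2"])
    fix t :: real assume t: "0 < t" "t \<le> 1"
    define y where "y = zk + t *\<^sub>R w"
    have yeq: "t *\<^sub>R zbar + (1 - t) *\<^sub>R zk = y" by (simp add: y_def w_def algebra_simps)
    have "t *\<^sub>R g zbar + (1 - t) *\<^sub>R g zk - g y \<in> K"
      using Kconv t unfolding K_convex_def yeq[symmetric] by auto
    then have "0 \<le> inner pk (t *\<^sub>R g zbar + (1 - t) *\<^sub>R g zk - g y)"
      using pkK by (simp add: dual_cone_def)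
    then have c1: "inner pk (g y) - inner pk (g zk) \<le> t * (inner pk (g zbar) - inner pk (g zk))"
      by (simp add: inner_diff_right inner_add_right algebra_simps)
    have gr: "norm (g y - g zk - transpose (Dg zk) *v (t *\<^sub>R w)) \<le> Lg * (t * norm w)^2"
    proof -
      have "norm (g y - g zk - transpose (Dg zk) *v (y - zk)) \<le> Lg * (norm (y - zk))^2" using grem by blast
      moreover have "y - zk = t *\<^sub>R w" by (simp add: y_def)
      moreover have "\<bar>t\<bar> = t" using t by simp
      ultimately show ?thesis by simp
    qed
    have lin: "inner pk (transpose (Dg zk) *v (t *\<^sub>R w)) = t * inner pk Jw"
    proof -
      have "inner pk (transpose (Dg zk) *v (t *\<^sub>R w)) = inner q (t *\<^sub>R w)"
        unfolding q_def by (rule inner_transpose_mv[symmetric])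
      also have "\<dots> = t * inner q w" by simp
      also have "inner q w = inner pk Jw" unfolding q_def Jw_def by (rule inner_transpose_mv)
      finally show ?thesis .
    qed
    have c2: "t * inner pk Jw - norm pk * (Lg * (t * norm w)^2) \<le> inner pk (g y) - inner pk (g zk)"
    proof -
      have "inner pk (g y) - inner pk (g zk) = inner pk (transpose (Dg zk) *v (t *\<^sub>R w))
          + inner pk (g y - g zk - transpose (Dg zk) *v (t *\<^sub>R w))"
        by (simp add: inner_diff_right)
      moreover have "- inner pk (g y - g zk - transpose (Dg zk) *v (t *\<^sub>R w)) \<le> norm pk * (Lg * (t * norm w)^2)"
      proof -
        have "- inner pk (g y - g zk - transpose (Dg zk) *v (t *\<^sub>R w))
            \<le> norm pk * norm (g y - g zk - transpose (Dg zk) *v (t *\<^sub>R w))"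
          using norm_cauchy_schwarz[of "- pk" "g y - g zk - transpose (Dg zk) *v (t *\<^sub>R w)"] by simp
        also have "\<dots> \<le> norm pk * (Lg * (t * norm w)^2)" using gr by (intro mult_left_mono) auto
        finally show ?thesis .
      qed
      ultimately show ?thesis using lin by linarith
    qed
    have "t * inner pk Jw - t * (inner pk (g zbar) - inner pk (g zk)) \<le> norm pk * (Lg * (t * norm w)^2)"
      using c1 c2 by linarith
    then have "t * (inner pk Jw - (inner pk (g zbar) - inner pk (g zk))) \<le> t * (norm pk * Lg * (norm w)^2 * t)"
      by (simp add: algebra_simps power2_eq_square)
    then show "inner pk Jw - (inner pk (g zbar) - inner pk (g zk)) \<le> norm pk * Lg * (norm w)^2 * t"
      using t by simp
  qed
  have gz: "inner pk (g zbar) \<le> 0"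
  proof -
    have "0 \<le> inner pk (- g zbar)" using pkK zbar unfolding dual_cone_def by blast
    then show ?thesis by simp
  qed
  have gzk: "inner pk (g zk) = ((norm pk)^2 - inner pk p) / c"
  proof -
    have "0 = inner pk (p + c *\<^sub>R g zk - pk)" using M(2) by (simp add: s0_def)
    then have "c * inner pk (g zk) = (norm pk)^2 - inner pk p"
      by (simp add: inner_diff_right inner_add_right power2_norm_eq_inner)
    then show ?thesis using c by (simp add: field_simps)
  qed
  have rg: "max (norm q) \<bar>inner pk (g zbar)\<bar> \<ge> tau * norm pk" using reg zk pkK by (simp add: q_def)
  have dm: "d * max (norm q) \<bar>inner pk (g zbar)\<bar> \<le> d * norm q + \<bar>inner pk (g zbar)\<bar>"
  proof -
    have "d * max (norm q) \<bar>inner pk (g zbar)\<bar> \<le> d * (norm q + \<bar>inner pk (g zbar)\<bar>)"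
      using ball(2) by (intro mult_left_mono) auto
    also have "\<dots> = d * norm q + d * \<bar>inner pk (g zbar)\<bar>" by (simp add: algebra_simps)
    also have "d * \<bar>inner pk (g zbar)\<bar> \<le> \<bar>inner pk (g zbar)\<bar>" using ball(2,3)
      by (intro mult_left_le_one_le) auto
    finally show ?thesis by simp
  qed
  have dt: "d * (tau * norm pk) \<le> d * max (norm q) \<bar>inner pk (g zbar)\<bar>"
    using rg ball(2) by (rule mult_left_mono)
  have "inner q (zk - u) \<ge> d * tau * norm pk + ((norm pk)^2 - inner pk p) / c"
    using iu qw conv gz gzk dm dt by (simp add: abs_if mult.assoc split: if_splits)
  then show ?thesis using uH unfolding q_def by blast
qed




theorem proposition4p4:
  fixes K :: "(real^'l) set"
    and H :: "(real^'n) set"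
    and h :: "real^'n \<Rightarrow> real"
    and f :: "real^'n \<Rightarrow> real" and gf :: "real^'n \<Rightarrow> real^'n" and U :: "(real^'n) set"
    and g :: "real^'n \<Rightarrow> real^'l" and Dg :: "real^'n \<Rightarrow> real^'l^'n"
    and Kh mf Lf Lg tau :: real and zbar :: "real^'n"
    and lam sgm c1 rho eta :: real and N :: nat
    and z v zhat :: "nat \<Rightarrow> real^'n" and eps c :: "nat \<Rightarrow> real"
    and p :: "nat \<Rightarrow> real^'l" and khat :: "nat \<Rightarrow> nat"
  defines "Kstar \<equiv> dual_cone K"
    and "Dh \<equiv> diameter H"
    and "Bf1 \<equiv> Sup ((\<lambda>z. norm (gf z)) ` H)"
    and "Bg0 \<equiv> Sup ((\<lambda>z. norm (g z)) ` H)"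
    and "Bg1 \<equiv> Sup ((\<lambda>z. onorm (\<lambda>q. Dg z *v q)) ` H)"
  assumes
    \<comment> \<open>standing assumptions on the cone\<close>
    K_cone: "convex_cone K" and K_closed: "closed K"
    \<comment> \<open>(B1): h proper lsc convex, K_h-Lipschitz on its domain H, H compact (h = +infinity outside H)\<close>
    and B1_H: "compact H" "convex H" "H \<noteq> {}"
    and B1_h: "convex_on H h"
    and B1_lip: "\<forall>z\<in>H. \<forall>z'\<in>H. \<bar>h z' - h z\<bar> \<le> Kh * norm (z' - z)"
    \<comment> \<open>(B2)\<close>
    and B2_U: "open U" "H \<subseteq> U"
    and B2_diff: "\<forall>z\<in>U. (f has_derivative (\<lambda>d. inner (gf z) d)) (at z)"
    and B2_const: "mf > 0" "Lf > 0"
    and B2_weak: "\<forall>z\<in>H. \<forall>z'\<in>H. f z' - f z - inner (gf z) (z' - z) \<ge> - (mf / 2) * (norm (z' - z))\<^sup>2"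
    and B2_lip: "\<forall>z\<in>H. \<forall>z'\<in>H. norm (gf z' - gf z) \<le> Lf * norm (z' - z)"
    \<comment> \<open>(B3)\<close>
    and B3_conv: "K_convex K g"
    and B3_diff: "\<forall>z. (g has_derivative (\<lambda>d. transpose (Dg z) *v d)) (at z)"
    and B3_lip: "\<forall>z z'. onorm (\<lambda>q. (Dg z' - Dg z) *v q) \<le> Lg * norm (z' - z)"
    \<comment> \<open>(B4)\<close>
    and B4: "zbar \<in> interior H" "0 < tau" "tau \<le> 1" "- g zbar \<in> K"
    and B4_reg: "\<forall>z\<in>H. \<forall>q\<in>Kstar. max (norm (Dg z *v q)) \<bar>inner q (g zbar)\<bar> \<ge> tau * norm q"
    \<comment> \<open>inputs of NL-IAPIAL\<close>
    and inp: "0 < lam" "lam \<le> 1 / (2 * mf)" "0 < sgm" "sgm \<le> 1 / sqrt 2" "0 < c1"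
      "z 0 \<in> H" "0 < rho" "0 < eta"
    and init: "c 1 = c1" "khat 0 = 0"
    \<comment> \<open>iterations 1..N of NL-IAPIAL are carried out up to (at least) step (3), with step (4) executed\<close>
    and iter: "\<forall>j\<in>{1..N}.
      (let Lpsi = lam * Lambda_const Lf Lg Bg0 Bg1 (c j) (p (j - 1)) + 1;
           sig = sgm / sqrt Lpsi;
           Phi = (\<lambda>u. lam * aug_lag f h g K (c j) u (p (j - 1)) + (1/2) * (norm (u - z (j - 1)))\<^sup>2);
           r = v j + z (j - 1) - z j;
           GL = (\<lambda>u. grad_Ltilde gf Dg g K (c j) u (p (j - 1)));
           Psi = (\<lambda>u. lam * (inner (GL (z j)) (u - z j) + h u) - inner r (u - z j)
                      + Lpsi / 2 * (norm (u - z j))\<^sup>2);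
           w = (1 / lam) *\<^sub>R (r + Lpsi *\<^sub>R (z j - zhat j));
           phat = closest_point Kstar (p (j - 1) + c j *\<^sub>R g (zhat j));
           qhat = (1 / c j) *\<^sub>R (p (j - 1) - phat);
           what = w + GL (zhat j) - GL (z j);
           kh = khat (j - 1);
           Delta = (aug_lag f h g K (c j) (z (kh + 1)) (p (kh + 1)) - aug_lag f h g K (c j) (z j) (p j))
                   / real (j - kh - 1)
       in \<comment> \<open>step (1): inexact proximal point subproblem\<close>
          z j \<in> H \<and> 0 \<le> eps j \<and>
          (\<forall>u\<in>H. Phi u \<ge> Phi (z j) + inner (v j) (u - z j) - eps j) \<and>
          (norm (v j))\<^sup>2 + 2 * eps j \<le> sig\<^sup>2 * (norm r)\<^sup>2 \<and>
          \<comment> \<open>step (2): zhat j is the argmin (over dom h = H) and the stopping test fails\<close>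
          zhat j \<in> H \<and> (\<forall>u\<in>H. Psi (zhat j) \<le> Psi u) \<and>
          \<not> (norm what \<le> rho \<and> norm qhat \<le> eta) \<and>
          \<comment> \<open>step (3)\<close>
          p j = closest_point Kstar (p (j - 1) + c j *\<^sub>R g (z j)) \<and>
          \<comment> \<open>step (4)\<close>
          (if j > kh + 1 \<and> Delta \<le> lam * (1 - sgm\<^sup>2) * rho\<^sup>2 / (4 * (1 + 2 * sgm)\<^sup>2)
           then c (j + 1) = 2 * c j \<and> khat j = j
           else c (j + 1) = c j \<and> khat j = kh))"
  shows "(let dbar = infdist zbar (frontier H);
              kappa0 = 2 * (Kh + Bf1) * Dh
                   + (sgm\<^sup>2 / (2 * (1 - sgm)\<^sup>2) + 2 * ((1 + sgm) / (1 - sgm))) * Dh\<^sup>2 / lam;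
              C0 = max (norm (p 0)) kappa0 / (min 1 dbar * tau)
          in (\<forall>k\<in>{1..N}. min 1 dbar * tau * norm (p k) + (norm (p k))\<^sup>2 / c k
                           \<le> kappa0 + (1 / c k) * inner (p k) (p (k - 1)))
           \<and> (\<forall>k\<le>N. norm (p k) \<le> C0))"
proof -
  have Hb: "bounded H" "closed H" using B1_H(1) by (auto intro: compact_imp_bounded compact_imp_closed)
  obtain z0 where z0: "z0 \<in> H" using inp(6) by blast
  have diam: "\<forall>x\<in>H. \<forall>y\<in>H. norm (x - y) \<le> Dh"
    using diameter_bounded_bound[OF Hb(1)] by (simp add: Dh_def dist_norm)
  have Dh0: "Dh \<ge> 0" using diam z0 by (metis norm_ge_zero order_trans)
  obtain e0 where e0: "e0 > 0" "ball zbar e0 \<subseteq> H" using B4(1) by (meson mem_interior)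
  obtain i :: 'n where True by blast
  define z1 where "z1 = zbar + (e0 / 2) *\<^sub>R axis i 1"
  have z1H: "z1 \<in> H" using e0 by (intro subsetD[OF e0(2)]) (simp add: z1_def dist_norm)
  have zbH: "zbar \<in> H" using e0 by auto
  have z1ne: "norm (z1 - zbar) > 0" using e0 by (simp add: z1_def)
  have Kh0: "Kh \<ge> 0"
  proof -
    have "0 \<le> Kh * norm (z1 - zbar)" using B1_lip z1H zbH by (meson abs_ge_zero order_trans)
    then show ?thesis using z1ne by (simp add: zero_le_mult_iff)
  qed
  have Lg0: "Lg \<ge> 0"
  proof -
    have "0 \<le> onorm (\<lambda>q. (Dg z1 - Dg zbar) *v q)" by (rule onorm_pos_le) simp
    also have "\<dots> \<le> Lg * norm (z1 - zbar)" using B3_lip by blast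
    finally show ?thesis using z1ne by (simp add: zero_le_mult_iff)
  qed
  have bf: "\<forall>x\<in>H. norm (gf x) \<le> Bf1" and Bf0: "Bf1 \<ge> 0"
  proof -
    have b: "norm (gf x) \<le> norm (gf z0) + Lf * Dh" if "x \<in> H" for x
    proof -
      have "norm (gf x) \<le> norm (gf z0) + norm (gf x - gf z0)" by (metis norm_triangle_sub)
      also have "norm (gf x - gf z0) \<le> Lf * norm (x - z0)" using B2_lip that z0 by blast
      also have "\<dots> \<le> Lf * Dh" using diam that z0 B2_const by (intro mult_left_mono) auto
      finally show ?thesis by simp
    qed
    have bdd: "bdd_above ((\<lambda>z. norm (gf z)) ` H)" using b by (intro bdd_aboveI2) auto
    show "\<forall>x\<in>H. norm (gf x) \<le> Bf1" unfolding Bf1_def using bdd by (auto intro: cSup_upper)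
    then show "Bf1 \<ge> 0" using z0 by (meson norm_ge_zero order_trans)
  qed
  have bg1: "\<forall>x\<in>H. onorm (\<lambda>q. Dg x *v q) \<le> Bg1"
  proof -
    have b: "onorm (\<lambda>q. Dg x *v q) \<le> onorm (\<lambda>q. Dg z0 *v q) + Lg * Dh" if "x \<in> H" for x
    proof -
      have eq: "(\<lambda>q. Dg x *v q) = (\<lambda>q. Dg z0 *v q + (Dg x - Dg z0) *v q)"
        by (simp add: matrix_vector_mult_diff_rdistrib)
      have "onorm (\<lambda>q. Dg x *v q) \<le> onorm (\<lambda>q. Dg z0 *v q) + onorm (\<lambda>q. (Dg x - Dg z0) *v q)"
        unfolding eq by (rule onorm_triangle) simp_all
      also have "onorm (\<lambda>q. (Dg x - Dg z0) *v q) \<le> Lg * norm (x - z0)" using B3_lip by blast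
      also have "\<dots> \<le> Lg * Dh" using diam that z0 Lg0 by (intro mult_left_mono) auto
      finally show ?thesis by simp
    qed
    have bdd: "bdd_above ((\<lambda>z. onorm (\<lambda>q. Dg z *v q)) ` H)" using b by (intro bdd_aboveI2) auto
    show ?thesis unfolding Bg1_def using bdd by (auto intro: cSup_upper)
  qed
  have glip: "\<forall>x\<in>H. \<forall>y\<in>H. norm (g y - g x) \<le> Bg1 * norm (y - x)"
  proof (intro ballI)
    fix x y assume xy: "x \<in> H" "y \<in> H"
    show "norm (g y - g x) \<le> Bg1 * norm (y - x)"
    proof (rule differentiable_bound[where f' = "\<lambda>z d. transpose (Dg z) *v d" and S = H])
      show "convex H" by (rule B1_H(2))
      fix z assume z: "z \<in> H"
      show "(g has_derivative (\<lambda>d. transpose (Dg z) *v d)) (at z within H)"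
        using B3_diff by (blast intro: has_derivative_at_withinI)
      show "onorm (\<lambda>d. transpose (Dg z) *v d) \<le> Bg1"
        using onorm_transpose_le[of "Dg z"] bg1 z by (meson order_trans)
    qed (use xy in auto)
  qed
  have bg0: "\<forall>x\<in>H. norm (g x) \<le> Bg0" and Bg00: "Bg0 \<ge> 0"
  proof -
    have b: "norm (g x) \<le> norm (g z0) + Bg1 * Dh" if "x \<in> H" for x
    proof -
      have "norm (g x) \<le> norm (g z0) + norm (g x - g z0)" by (metis norm_triangle_sub)
      also have "norm (g x - g z0) \<le> Bg1 * norm (x - z0)" using glip that z0 by blast
      also have "\<dots> \<le> Bg1 * Dh"
      proof -
        have "0 \<le> Bg1" using bg1 z0 onorm_pos_le[OF matrix_vector_mul_bounded_linear, of "Dg z0"]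
          by (meson order_trans)
        then show ?thesis using diam that z0 by (intro mult_left_mono) auto
      qed
      finally show ?thesis by simp
    qed
    have bdd: "bdd_above ((\<lambda>z. norm (g z)) ` H)" using b by (intro bdd_aboveI2) auto
    show "\<forall>x\<in>H. norm (g x) \<le> Bg0" unfolding Bg0_def using bdd by (auto intro: cSup_upper)
    then show "Bg0 \<ge> 0" using z0 by (meson norm_ge_zero order_trans)
  qed
  have frem: "\<forall>x\<in>H. \<forall>y\<in>H. f y - f x - inner (gf x) (y - x) \<le> Lf * (norm (y - x))^2"
  proof (intro ballI)
    fix x y assume xy: "x \<in> H" "y \<in> H"
    have "norm (f y - f x - inner (gf x) (y - x)) \<le> Lf * (norm (y - x))^2"
    proof (rule rem_gen[where S = H and f' = "\<lambda>z d. inner (gf z) d"])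
      fix z assume z: "z \<in> H"
      show "(f has_derivative (\<lambda>d. inner (gf z) d)) (at z within H)"
        using B2_diff B2_U z by (blast intro: has_derivative_at_withinI)
      show "onorm (\<lambda>d. inner (gf z) d - inner (gf x) d) \<le> Lf * norm (z - x)"
      proof (rule onorm_le)
        fix d
        have "norm (inner (gf z) d - inner (gf x) d) = \<bar>inner (gf z - gf x) d\<bar>"
          by (simp add: inner_diff_left)
        also have "\<dots> \<le> norm (gf z - gf x) * norm d" by (rule Cauchy_Schwarz_ineq2)
        also have "\<dots> \<le> Lf * norm (z - x) * norm d"
          using B2_lip z xy by (intro mult_right_mono) auto
        finally show "norm (inner (gf z) d - inner (gf x) d) \<le> Lf * norm (z - x) * norm d" .
      qed
    qed (use xy B1_H B2_const in auto)
    then show "f y - f x - inner (gf x) (y - x) \<le> Lf * (norm (y - x))^2" by simp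
  qed
  have grem: "\<forall>x y. norm (g y - g x - transpose (Dg x) *v (y - x)) \<le> Lg * (norm (y - x))^2"
    using g_rem[OF B3_diff B3_lip Lg0] by blast
  define dbar where "dbar = infdist zbar (frontier H)"
  define d where "d = min 1 dbar"
  have dbar0: "dbar > 0"
  proof -
    have "frontier H \<noteq> {}" using B1_H(3) Hb(1) by (auto simp: frontier_eq_empty)
    moreover have "zbar \<notin> frontier H" using B4(1) by (simp add: frontier_def)
    ultimately show ?thesis unfolding dbar_def by (intro infdist_pos_not_in_closed) auto
  qed
  have ballH: "ball zbar dbar \<subseteq> H"
  proof
    fix y assume y: "y \<in> ball zbar dbar"
    show "y \<in> H"
    proof (rule ccontr)
      assume yn: "y \<notin> H"
      have "closed_segment zbar y \<inter> frontier H \<noteq> {}"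
        by (rule connected_Int_frontier) (use zbH yn in auto)
      then obtain x where x: "x \<in> closed_segment zbar y" "x \<in> frontier H" by blast
      have "dist zbar x \<le> dist zbar y" using dist_in_closed_segment[OF x(1)] by (simp add: dist_commute)
      also have "\<dots> < dbar" using y by simp
      also have "dbar \<le> dist zbar x" unfolding dbar_def by (rule infdist_le[OF x(2)])
      finally show False by simp
    qed
  qed
  have cballH: "cball zbar d \<subseteq> H"
  proof -
    have "cball zbar dbar = closure (ball zbar dbar)" using dbar0 by simp
    also have "\<dots> \<subseteq> H" using ballH Hb(2) by (metis closure_minimal)
    finally show ?thesis using subset_cball[of d dbar zbar] by (simp add: d_def)
  qed
  have d0: "d > 0" "d \<le> 1" using dbar0 by (auto simp: d_def)
  have sg: "0 < sgm" "sgm < 1"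
  proof -
    show "0 < sgm" using inp(3) .
    have "1 / sqrt 2 < (1::real)" by (simp add: divide_less_eq)
    then show "sgm < 1" using inp(4) by linarith
  qed
  have cpos: "\<forall>k. 1 \<le> k \<longrightarrow> k \<le> N \<longrightarrow> c k > 0"
  proof (intro allI)
    fix k show "1 \<le> k \<longrightarrow> k \<le> N \<longrightarrow> c k > 0"
    proof (induction k)
      case 0 then show ?case by simp
    next
      case (Suc k)
      show ?case
      proof (cases "k = 0")
        case True then show ?thesis using init inp(5) by simp
      next
        case False
        show ?thesis
        proof (intro impI)
          assume "1 \<le> Suc k" "Suc k \<le> N"
          then have k: "k \<in> {1..N}" and ck: "c k > 0" using Suc.IH False by auto
          have "c (k + 1) = 2 * c k \<or> c (k + 1) = c k"
            using iter[rule_format, OF k] unfolding Let_def by (auto split: if_splits)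
          then show "c (Suc k) > 0" using ck by auto
        qed
      qed
    qed
  qed
  define kappa0 where "kappa0 = 2 * (Kh + Bf1) * Dh
                   + (sgm\<^sup>2 / (2 * (1 - sgm)\<^sup>2) + 2 * ((1 + sgm) / (1 - sgm))) * Dh\<^sup>2 / lam"
  define C0 where "C0 = max (norm (p 0)) kappa0 / (min 1 dbar * tau)"
  have A: "\<forall>k\<in>{1..N}. min 1 dbar * tau * norm (p k) + (norm (p k))\<^sup>2 / c k
                           \<le> kappa0 + (1 / c k) * inner (p k) (p (k - 1))"
  proof
    fix k assume k: "k \<in> {1..N}"
    note itk = iter[rule_format, OF k, unfolded Let_def]
    have zkH: "z k \<in> H" and ek: "0 \<le> eps k"
      and prox: "\<forall>u\<in>H. lam * aug_lag f h g K (c k) u (p (k - 1)) + (1/2) * (norm (u - z (k - 1)))^2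
       \<ge> lam * aug_lag f h g K (c k) (z k) (p (k - 1)) + (1/2) * (norm (z k - z (k - 1)))^2 + inner (v k) (u - z k) - eps k"
      and vb: "(norm (v k))^2 + 2 * eps k \<le> (sgm / sqrt (lam * Lambda_const Lf Lg Bg0 Bg1 (c k) (p (k - 1)) + 1))^2
                 * (norm (v k + z (k - 1) - z k))^2"
      and pk: "p k = closest_point Kstar (p (k - 1) + c k *\<^sub>R g (z k))"
      using itk by blast+
    have zoH: "z (k - 1) \<in> H"
    proof (cases "k = 1")
      case True then show ?thesis using inp(6) by simp
    next
      case False
      then have "k - 1 \<in> {1..N}" using k by auto
      then show ?thesis using iter[rule_format, of "k - 1", unfolded Let_def] by blast
    qed
    have ck: "c k > 0" using cpos k by auto
    define L where "L = lam * Lambda_const Lf Lg Bg0 Bg1 (c k) (p (k - 1)) + 1"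
    have Lam: "Lambda_const Lf Lg Bg0 Bg1 (c k) (p (k - 1)) \<ge> Lf + Lg * (norm (p (k - 1)) + c k * Bg0) + c k * Bg1^2 / 2"
      "Lambda_const Lf Lg Bg0 Bg1 (c k) (p (k - 1)) \<ge> 0"
    proof -
      have "c k * Bg1^2 \<ge> 0" using ck by simp
      then show "Lambda_const Lf Lg Bg0 Bg1 (c k) (p (k - 1)) \<ge> Lf + Lg * (norm (p (k - 1)) + c k * Bg0) + c k * Bg1^2 / 2"
        by (simp add: Lambda_const_def algebra_simps)
      have "Lg * norm (p (k - 1)) \<ge> 0" "c k * (Bg0 * Lg + Bg1^2) \<ge> 0" using Lg0 Bg00 ck by simp_all
      then show "Lambda_const Lf Lg Bg0 Bg1 (c k) (p (k - 1)) \<ge> 0"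
        using B2_const by (simp add: Lambda_const_def)
    qed
    have L1: "L \<ge> lam * (Lf + Lg * (norm (p (k - 1)) + c k * Bg0) + c k * Bg1^2 / 2) + 1/2"
    proof -
      have "lam * (Lf + Lg * (norm (p (k - 1)) + c k * Bg0) + c k * Bg1^2 / 2)
          \<le> lam * Lambda_const Lf Lg Bg0 Bg1 (c k) (p (k - 1))"
        by (rule mult_left_mono[OF Lam(1)]) (use inp(1) in simp)
      then show ?thesis unfolding L_def by linarith
    qed
    have L2: "L \<ge> 1" unfolding L_def using Lam(2) inp(1) by simp
    have up: "\<forall>u\<in>H. inner (Dg (z k) *v p k) (z k - u)
       \<le> (Kh + Bf1) * Dh + ((1 + 2 * sgm) / (1 - sgm) + sgm^2 / (2 * (1 - sgm)^2)) * Dh^2 / lam"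
    proof
      fix u assume u: "u \<in> H"
      show "inner (Dg (z k) *v p k) (z k - u)
       \<le> (Kh + Bf1) * Dh + ((1 + 2 * sgm) / (1 - sgm) + sgm^2 / (2 * (1 - sgm)^2)) * Dh^2 / lam"
        by (rule upper_step[OF K_cone K_closed B1_H(2) B1_h B1_lip frem bf grem glip bg0 Lg0 Kh0 Bf0
              diam inp(1) sg ck L1 L2 zkH zoH ek prox vb[folded L_def] pk[unfolded Kstar_def] u])
    qed
    obtain u where u: "u \<in> H" and lo: "inner (Dg (z k) *v p k) (z k - u)
         \<ge> d * tau * norm (p k) + ((norm (p k))^2 - inner (p k) (p (k - 1))) / c k"
      using lower_step[OF K_cone K_closed B3_conv grem B4(4) B4_reg[unfolded Kstar_def] cballH
          less_imp_le[OF d0(1)] d0(2) ck zkH pk[unfolded Kstar_def]] by blast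
    have cmp: "(Kh + Bf1) * Dh + ((1 + 2 * sgm) / (1 - sgm) + sgm^2 / (2 * (1 - sgm)^2)) * Dh^2 / lam \<le> kappa0"
    proof -
      have a1: "(Kh + Bf1) * Dh \<le> 2 * (Kh + Bf1) * Dh"
      proof -
        have "2 * (Kh + Bf1) * Dh = (Kh + Bf1) * Dh + (Kh + Bf1) * Dh" by (simp add: algebra_simps)
        then show ?thesis using mult_nonneg_nonneg[of "Kh + Bf1" Dh] Kh0 Bf0 Dh0 by linarith
      qed
      have "(1 + 2 * sgm) / (1 - sgm) \<le> 2 * ((1 + sgm) / (1 - sgm))"
        using sg by (simp add: divide_le_eq field_simps)
      then have "((1 + 2 * sgm) / (1 - sgm) + sgm^2 / (2 * (1 - sgm)^2)) * Dh^2
          \<le> (sgm\<^sup>2 / (2 * (1 - sgm)\<^sup>2) + 2 * ((1 + sgm) / (1 - sgm))) * Dh^2"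
        by (intro mult_right_mono) auto
      then have a2: "((1 + 2 * sgm) / (1 - sgm) + sgm^2 / (2 * (1 - sgm)^2)) * Dh^2 / lam
          \<le> (sgm\<^sup>2 / (2 * (1 - sgm)\<^sup>2) + 2 * ((1 + sgm) / (1 - sgm))) * Dh^2 / lam"
        using inp(1) by (intro divide_right_mono) auto
      show ?thesis unfolding kappa0_def using a1 a2 by linarith
    qed
    have "d * tau * norm (p k) + ((norm (p k))^2 - inner (p k) (p (k - 1))) / c k \<le> kappa0"
      using lo up u cmp by (meson order_trans)
    moreover have "((norm (p k))^2 - inner (p k) (p (k - 1))) / c k
        = (norm (p k))^2 / c k - (1 / c k) * inner (p k) (p (k - 1))"
      by (simp add: diff_divide_distrib)
    ultimately show "min 1 dbar * tau * norm (p k) + (norm (p k))\<^sup>2 / c k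
                           \<le> kappa0 + (1 / c k) * inner (p k) (p (k - 1))"
      unfolding d_def by linarith
  qed
  have m0: "min 1 dbar * tau > 0" "min 1 dbar * tau \<le> 1"
    using d0 B4(2,3) by (auto simp: d_def[symmetric] intro: mult_le_one)
  have mx0: "0 \<le> max (norm (p 0)) kappa0" by (simp add: le_max_iff_disj)
  have C00: "C0 \<ge> 0" unfolding C0_def using m0 mx0 by (auto intro!: divide_nonneg_pos)
  have B: "\<forall>k\<le>N. norm (p k) \<le> C0"
  proof (intro allI impI)
    fix k assume "k \<le> N"
    then show "norm (p k) \<le> C0"
    proof (induction k)
      case 0
      have "norm (p 0) \<le> max (norm (p 0)) kappa0" by simp
      also have "\<dots> \<le> max (norm (p 0)) kappa0 / (min 1 dbar * tau)"
      proof -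
        have "max (norm (p 0)) kappa0 * (min 1 dbar * tau) \<le> max (norm (p 0)) kappa0 * 1"
          using m0 mx0 by (intro mult_left_mono) auto
        then show ?thesis using m0 by (simp add: le_divide_eq)
      qed
      finally show ?case by (simp add: C0_def)
    next
      case (Suc k)
      then have IH: "norm (p k) \<le> C0" by simp
      have k: "Suc k \<in> {1..N}" using Suc.prems by simp
      let ?m = "min 1 dbar * tau" and ?n = "norm (p (Suc k))"
      have ck: "c (Suc k) > 0" using cpos k by auto
      have a: "?m * ?n + ?n^2 / c (Suc k) \<le> kappa0 + (1 / c (Suc k)) * inner (p (Suc k)) (p k)"
        using A k by fastforce
      have "inner (p (Suc k)) (p k) \<le> ?n * C0"
        using norm_cauchy_schwarz[of "p (Suc k)" "p k"] IH
        by (meson mult_left_mono norm_ge_zero order_trans)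
      then have "inner (p (Suc k)) (p k) / c (Suc k) \<le> ?n * C0 / c (Suc k)"
        using ck by (intro divide_right_mono) auto
      then have a': "?m * ?n + ?n^2 / c (Suc k) \<le> kappa0 + ?n * C0 / c (Suc k)"
        using a by simp
      show ?case
      proof (rule ccontr)
        assume "\<not> ?n \<le> C0"
        then have gt: "?n > C0" by simp
        have "?n * C0 < ?n * ?n" using gt C00 by (intro mult_strict_left_mono) auto
        then have "?n * C0 < ?n^2" by (simp add: power2_eq_square)
        then have "?n * C0 / c (Suc k) < ?n^2 / c (Suc k)" using ck by (simp add: divide_strict_right_mono)
        then have "?m * ?n < kappa0" using a' by linarith
        then have "?n < kappa0 / ?m" using m0 by (simp add: less_divide_eq mult.commute)
        also have "\<dots> \<le> C0" unfolding C0_def using m0 by (intro divide_right_mono) auto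
        finally show False using gt by simp
      qed
    qed
  qed
  show ?thesis using A B unfolding Let_def C0_def kappa0_def dbar_def by blast
qed


end
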